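(* Let $R$ be a commutative ring with identity, let $(S,\leq)$ be a strictly ordered monoid in which $\leq$ is a total order, and let $w\in S$. Let $P_w:[[R^{S,\leq}]]\to[[R^{S,\leq}]]$ be given by $P_w(f)(s)=f(s)$ if $s<w$ and $P_w(f)(s)=0$ otherwise, and set $B_w=\{(u,v)\in S\times S: u<w,\ v<w,\ u+v\not<w\}$. Then $([[R^{S,\leq}]],P_w)$ is a Rota-Baxter algebra (of weight $-1$) if and only if $w\geq 0$ and $B_w=\emptyset$.
   Context: All monoids are commutative and written additively with neutral element $0$. A partially ordered set is artinian if every strictly decreasing sequence is finite, and narrow if every subset of pairwise incomparable elements is finite. A strictly ordered monoid is a commutative monoid $S$ with a partial order $\leq$ such that $s<s'$ implies $s+t<s'+t$ for all $s,s',t\in S$. The ring of generalized power series $[[R^{S,\leq}]]$ is the set of maps $f:S\to R$ with artinian and narrow support $\{s: f(s)\neq 0\}$, with pointwise addition and convolution $(fg)(s)=\sum f(u)g(v)$ over the finitely many pairs $(u,v)$ with $u+v=s$, $f(u)\neq0$, $g(v)\neq0$. A Rota-Baxter algebra (of weight $-1$) is an associative $R$-algebra $A$ with an $R$-linear $P:A\to A$ satisfying $P(x)P(y)=P(xP(y))+P(P(x)y)-P(xy)$ for all $x,y\in A$. *)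

theory Defs
  imports Main
begin

definition artinian :: "'a::order set \<Rightarrow> bool" where
  "artinian A \<longleftrightarrow> \<not> (\<exists>f::nat \<Rightarrow> 'a. \<forall>n. f n \<in> A \<and> f (Suc n) < f n)"

definition narrow :: "'a::order set \<Rightarrow> bool" where
  "narrow A \<longleftrightarrow> (\<forall>B \<subseteq> A. (\<forall>x\<in>B. \<forall>y\<in>B. x \<noteq> y \<longrightarrow> \<not> x \<le> y \<and> \<not> y \<le> x) \<longrightarrow> finite B)"

definition support :: "('a \<Rightarrow> 'r::zero) \<Rightarrow> 'a set" where
  "support f = {s. f s \<noteq> 0}"

definition gps :: "('a::order \<Rightarrow> 'r::zero) set" where
  "gps = {f. artinian (support f) \<and> narrow (support f)}"

definition gps_mult :: "('a::plus \<Rightarrow> 'r::comm_ring_1) \<Rightarrow> ('a \<Rightarrow> 'r) \<Rightarrow> 'a \<Rightarrow> 'r" where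
  "gps_mult f g s = (\<Sum>(u,v) \<in> {(u,v). u + v = s \<and> f u \<noteq> 0 \<and> g v \<noteq> 0}. f u * g v)"

definition P_op :: "'a::order \<Rightarrow> ('a \<Rightarrow> 'r::zero) \<Rightarrow> 'a \<Rightarrow> 'r" where
  "P_op w f = (\<lambda>s. if s < w then f s else 0)"

definition B_set :: "'a::{order,plus} \<Rightarrow> ('a \<times> 'a) set" where
  "B_set w = {(u,v). u < w \<and> v < w \<and> \<not> (u + v < w)}"

definition rota_baxter ::
  "('a \<Rightarrow> 'r::comm_ring_1) set \<Rightarrow> (('a \<Rightarrow> 'r) \<Rightarrow> ('a \<Rightarrow> 'r) \<Rightarrow> ('a \<Rightarrow> 'r))
    \<Rightarrow> (('a \<Rightarrow> 'r) \<Rightarrow> ('a \<Rightarrow> 'r)) \<Rightarrow> bool" where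
  "rota_baxter A mult P \<longleftrightarrow>
     (\<forall>x\<in>A. P x \<in> A) \<and>
     (\<forall>x\<in>A. \<forall>y\<in>A. P (\<lambda>s. x s + y s) = (\<lambda>s. P x s + P y s)) \<and>
     (\<forall>r. \<forall>x\<in>A. P (\<lambda>s. r * x s) = (\<lambda>s. r * P x s)) \<and>
     (\<forall>x\<in>A. \<forall>y\<in>A.
        mult (P x) (P y) = (\<lambda>s. P (mult x (P y)) s + P (mult (P x) y) s - P (mult x y) s))"

end

theory Submission
  imports Defs
begin

lemma artinian_subset: "artinian A \<Longrightarrow> B \<subseteq> A \<Longrightarrow> artinian B"
  unfolding artinian_def by (meson subsetD)

lemma narrow_subset: "narrow A \<Longrightarrow> B \<subseteq> A \<Longrightarrow> narrow B"
  unfolding narrow_def by (meson subset_trans)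

lemma artinian_min:
  fixes A :: "'a::order set"
  assumes "artinian A" "X \<subseteq> A" "X \<noteq> {}"
  shows "\<exists>m\<in>X. \<forall>x\<in>X. \<not> x < m"
proof -
  define r where "r = {(x,y). x \<in> A \<and> y \<in> A \<and> x < y}"
  have w: "wf r"
    unfolding wf_iff_no_infinite_down_chain
  proof
    assume "\<exists>f. \<forall>i. (f (Suc i), f i) \<in> r"
    then obtain f where "\<forall>i. (f (Suc i), f i) \<in> r" by blast
    then have "\<forall>n. f n \<in> A \<and> f (Suc n) < f n" by (simp add: r_def)
    then show False using assms(1) unfolding artinian_def by blast
  qed
  obtain x where x: "x \<in> X" using assms(3) by blast
  have "\<exists>z\<in>X. \<forall>y. (y, z) \<in> r \<longrightarrow> y \<notin> X"
    using w x by (rule wf_eq_minimal[THEN iffD1, rule_format])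
  then show ?thesis using assms(2) unfolding r_def by blast
qed

definition noinc :: "'a::order set \<Rightarrow> bool" where
  "noinc A \<longleftrightarrow> \<not> (\<exists>f::nat \<Rightarrow> 'a. \<forall>n. f n \<in> A \<and> f n < f (Suc n))"

lemma noinc_max:
  fixes A :: "'a::order set"
  assumes "noinc A" "X \<subseteq> A" "X \<noteq> {}"
  shows "\<exists>m\<in>X. \<forall>x\<in>X. \<not> m < x"
proof -
  define r where "r = {(x,y). x \<in> A \<and> y \<in> A \<and> y < x}"
  have w: "wf r"
    unfolding wf_iff_no_infinite_down_chain
  proof
    assume "\<exists>f. \<forall>i. (f (Suc i), f i) \<in> r"
    then obtain f where "\<forall>i. (f (Suc i), f i) \<in> r" by blast
    then have "\<forall>n. f n \<in> A \<and> f n < f (Suc n)" by (simp add: r_def)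
    then show False using assms(1) unfolding noinc_def by blast
  qed
  obtain x where x: "x \<in> X" using assms(3) by blast
  have "\<exists>z\<in>X. \<forall>y. (y, z) \<in> r \<longrightarrow> y \<notin> X"
    using w x by (rule wf_eq_minimal[THEN iffD1, rule_format])
  then show ?thesis using assms(2) unfolding r_def by blast
qed

lemma fin_both:
  fixes U :: "'a::linorder set"
  assumes a: "artinian U" and n: "noinc U"
  shows "finite U"
proof -
  have key: "\<forall>u\<in>U. finite {x\<in>U. x \<le> u}"
  proof (rule ccontr)
    assume "\<not> ?thesis"
    then have "{u\<in>U. infinite {x\<in>U. x \<le> u}} \<noteq> {}" by auto
    then obtain m where m: "m \<in> U" "infinite {x\<in>U. x \<le> m}"
      and mmin: "\<forall>x\<in>{u\<in>U. infinite {x\<in>U. x \<le> u}}. \<not> x < m"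
      using artinian_min[OF a, of "{u\<in>U. infinite {x\<in>U. x \<le> u}}"] by blast
    show False
    proof (cases "{x\<in>U. x < m} = {}")
      case True
      then have "{x\<in>U. x \<le> m} = {m}" using m(1) by force
      then show False using m(2) by simp
    next
      case False
      then obtain M where M: "M \<in> U" "M < m" and Mmax: "\<forall>x\<in>{x\<in>U. x < m}. \<not> M < x"
        using noinc_max[OF n, of "{x\<in>U. x < m}"] by blast
      have "finite {x\<in>U. x \<le> M}" using mmin M by auto
      moreover have "{x\<in>U. x \<le> m} = insert m {x\<in>U. x \<le> M}"
        using Mmax M m(1) by (auto simp: not_less)
      ultimately show False using m(2) by simp
    qed
  qed
  show ?thesis
  proof (cases "U = {}")
    case True then show ?thesis by simp
  next
    case False
    then obtain M where M: "M \<in> U" "\<forall>x\<in>U. \<not> M < x"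
      using noinc_max[OF n, of U] by blast
    have "U \<subseteq> {x\<in>U. x \<le> M}" using M by (auto simp: not_less)
    moreover have "finite {x\<in>U. x \<le> M}" using key M(1) by blast
    ultimately show ?thesis by (rule finite_subset)
  qed
qed

lemma add_le_mono2:
  fixes v v' u :: "'a::{linorder, comm_monoid_add}"
  assumes strict: "\<And>s s' t :: 'a. s < s' \<Longrightarrow> s + t < s' + t"
    and "v \<le> v'"
  shows "u + v \<le> u + v'"
proof (cases "v = v'")
  case False
  then have "v < v'" using assms(2) by simp
  then have "v + u < v' + u" using strict by blast
  then show ?thesis by (simp add: add.commute)
qed simp

lemma anti:
  fixes u v u' v' :: "'a::{linorder, comm_monoid_add}"
  assumes strict: "\<And>s s' t :: 'a. s < s' \<Longrightarrow> s + t < s' + t"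
    and "u + v = u' + v'" "u < u'"
  shows "v' < v"
proof (rule ccontr)
  assume "\<not> v' < v"
  then have "v \<le> v'" by simp
  then have "u' + v \<le> u' + v'" using add_le_mono2[OF strict] by blast
  moreover have "u + v < u' + v" using strict assms(3) by blast
  ultimately show False using assms(2) by simp
qed

lemma fin_pairs:
  fixes f g :: "'a::{linorder, comm_monoid_add} \<Rightarrow> 'r::zero"
  assumes strict: "\<And>s s' t :: 'a. s < s' \<Longrightarrow> s + t < s' + t"
    and af: "artinian (support f)" and ag: "artinian (support g)"
  shows "finite {(u,v). u + v = s \<and> f u \<noteq> 0 \<and> g v \<noteq> 0}"
proof -
  define F where "F = {(u,v). u + v = s \<and> f u \<noteq> 0 \<and> g v \<noteq> 0}"
  have inj: "inj_on fst F"
  proof (rule inj_onI)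
    fix p q assume "p \<in> F" "q \<in> F" "fst p = fst q"
    then obtain u v v' where pq: "p = (u,v)" "q = (u,v')" "u + v = u + v'"
      unfolding F_def by (cases p, cases q) auto
    have "v = v'"
    proof (rule ccontr)
      assume "v \<noteq> v'"
      then have "v < v' \<or> v' < v" by auto
      then have "v + u < v' + u \<or> v' + u < v + u" using strict by blast
      then show False using pq(3) by (auto simp: add.commute)
    qed
    then show "p = q" using pq by simp
  qed
  have sub: "fst ` F \<subseteq> support f" unfolding F_def support_def by auto
  have "noinc (fst ` F)"
    unfolding noinc_def
  proof
    assume "\<exists>h::nat \<Rightarrow> 'a. \<forall>n. h n \<in> fst ` F \<and> h n < h (Suc n)"
    then obtain h where h: "\<And>n. h n \<in> fst ` F" "\<And>n. h n < h (Suc n)" by blast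
    have "\<forall>n. \<exists>v. (h n, v) \<in> F" using h(1) by force
    then obtain k where k: "\<And>n. (h n, k n) \<in> F" by metis
    have "\<forall>n. k n \<in> support g \<and> k (Suc n) < k n"
    proof
      fix n
      have e: "h n + k n = h (Suc n) + k (Suc n)" using k[of n] k[of "Suc n"] unfolding F_def by auto
      show "k n \<in> support g \<and> k (Suc n) < k n"
        using k[of n] anti[OF strict e h(2)[of n]] unfolding F_def support_def by auto
    qed
    then show False using ag unfolding artinian_def by (meson subsetD)
  qed
  then have "finite (fst ` F)" using fin_both artinian_subset[OF af sub] by blast
  then show ?thesis using finite_imageD[OF _ inj] unfolding F_def by blast
qed

lemma gps_mult_F:
  assumes "finite F" "\<And>u v. (u,v) \<in> F \<Longrightarrow> u + v = s"
    "{(u,v). u + v = s \<and> f u \<noteq> 0 \<and> g v \<noteq> 0} \<subseteq> F"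
  shows "gps_mult f g s = (\<Sum>(u,v)\<in>F. f u * g v)"
  unfolding gps_mult_def
proof (rule sum.mono_neutral_left[OF assms(1) assms(3)])
  show "\<forall>i\<in>F - {(u, v). u + v = s \<and> f u \<noteq> 0 \<and> g v \<noteq> 0}. (case i of (u, v) \<Rightarrow> f u * g v) = 0"
    using assms(2) by auto
qed

definition dl :: "'r::zero \<Rightarrow> 'a \<Rightarrow> 'a \<Rightarrow> 'r" where
  "dl c a = (\<lambda>s. if s = a then c else 0)"

lemma dl_gps: "dl c a \<in> gps"
proof -
  have s: "support (dl c a) \<subseteq> {a}" unfolding support_def dl_def by auto
  have "artinian {a}" unfolding artinian_def
  proof
    assume "\<exists>f::nat \<Rightarrow> 'a. \<forall>n. f n \<in> {a} \<and> f (Suc n) < f n"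
    then obtain f :: "nat \<Rightarrow> 'a" where "\<forall>n. f n \<in> {a} \<and> f (Suc n) < f n" by blast
    then show False by (metis less_irrefl singletonD)
  qed
  moreover have "narrow {a}" unfolding narrow_def
    by (metis finite.emptyI finite.insertI finite_subset)
  ultimately show ?thesis unfolding gps_def using s artinian_subset narrow_subset by blast
qed

lemma P_dl: "P_op w (dl c a) = dl (if a < w then c else 0) a"
  unfolding P_op_def dl_def by auto

lemma mult_dl:
  fixes a b :: "'a::comm_monoid_add"
  shows "gps_mult (dl c a) (dl d b) (a + b) = (c * d :: 'r::comm_ring_1)"
proof (cases "c = 0 \<or> d = 0")
  case True
  then have e: "{(u,v). u + v = a + b \<and> dl c a u \<noteq> 0 \<and> dl d b v \<noteq> 0} = {}"
    unfolding dl_def by auto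
  show ?thesis unfolding gps_mult_def e using True by auto
next
  case False
  then have "{(u,v). u + v = a + b \<and> dl c a u \<noteq> 0 \<and> dl d b v \<noteq> 0} = {(a,b)}"
    unfolding dl_def by (auto split: if_splits)
  then show ?thesis unfolding gps_mult_def by (simp add: dl_def)
qed

theorem corollary3p2:
  fixes w :: "'a::{linorder, comm_monoid_add}"
  assumes nontriv: "(1::'r::comm_ring_1) \<noteq> 0"
    and strict: "\<And>s s' t :: 'a. s < s' \<Longrightarrow> s + t < s' + t"
  shows "rota_baxter (gps :: ('a \<Rightarrow> 'r) set) gps_mult (P_op w)
           \<longleftrightarrow> (0 \<le> w \<and> B_set w = {})"
proof
  assume rb: "rota_baxter (gps :: ('a \<Rightarrow> 'r) set) gps_mult (P_op w)"
  have id: "\<And>a b. (if a < w then 1 else 0) * (if b < w then 1 else 0)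
      = (if a + b < w then (if b < w then 1 else 0) + (if a < w then 1 else 0) - 1 else (0::'r))"
  proof -
    fix a b :: 'a
    have RBx: "\<And>x y. x \<in> (gps :: ('a \<Rightarrow> 'r) set) \<Longrightarrow> y \<in> gps \<Longrightarrow> gps_mult (P_op w x) (P_op w y) =
        (\<lambda>s. P_op w (gps_mult x (P_op w y)) s + P_op w (gps_mult (P_op w x) y) s - P_op w (gps_mult x y) s)"
      using rb unfolding rota_baxter_def by blast
    have e: "gps_mult (P_op w (dl (1::'r) a)) (P_op w (dl 1 b)) (a+b)
      = P_op w (gps_mult (dl 1 a) (P_op w (dl 1 b))) (a+b)
        + P_op w (gps_mult (P_op w (dl 1 a)) (dl 1 b)) (a+b)
        - P_op w (gps_mult (dl 1 a) (dl 1 b)) (a+b)"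
      using fun_cong[OF RBx[OF dl_gps dl_gps], where x="a+b"] .
    show "?thesis a b"
      using e unfolding P_dl
      apply (simp only: P_op_def mult_dl mult_1_left mult_1_right)
      by (cases "a + b < w") simp_all
  qed
  show "0 \<le> w \<and> B_set w = {}"
  proof
    show "0 \<le> w"
    proof (rule ccontr)
      assume "\<not> 0 \<le> w"
      then have "w < 0" by simp
      then have "w + w < 0 + w" using strict by blast
      then have "w + w < w" by simp
      then have "(0::'r) = 0 + 0 - 1" using id[of w w] by simp
      then show False using nontriv by (metis add_0 diff_0 neg_equal_0_iff_equal)
    qed
    show "B_set w = {}"
    proof (rule ccontr)
      assume "B_set w \<noteq> {}"
      then obtain a b where "a < w" "b < w" "\<not> a + b < w" unfolding B_set_def by auto
      then show False using id[of a b] nontriv by simp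
    qed
  qed
next
  assume h: "0 \<le> w \<and> B_set w = {}"
  have closeI: "\<And>u v. u < w \<Longrightarrow> v < w \<Longrightarrow> u + v < w"
    using h unfolding B_set_def by blast
  have closeJ: "\<And>u v. \<not> u < w \<Longrightarrow> \<not> v < w \<Longrightarrow> \<not> u + v < w"
  proof -
    fix u v :: 'a assume "\<not> u < w" "\<not> v < w"
    then have "0 \<le> v" using h by auto
    then have "u + 0 \<le> u + v" using add_le_mono2[OF strict] by blast
    then show "\<not> u + v < w" using \<open>\<not> u < w\<close> by simp
  qed
  have Pgps: "\<forall>x\<in>(gps :: ('a \<Rightarrow> 'r) set). P_op w x \<in> gps"
  proof
    fix x :: "'a \<Rightarrow> 'r" assume "x \<in> gps"
    moreover have "support (P_op w x) \<subseteq> support x" unfolding support_def P_op_def by auto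
    ultimately show "P_op w x \<in> gps" unfolding gps_def using artinian_subset narrow_subset by blast
  qed
  have RB: "gps_mult (P_op w x) (P_op w y) s =
      P_op w (gps_mult x (P_op w y)) s + P_op w (gps_mult (P_op w x) y) s - P_op w (gps_mult x y) s"
    if x: "x \<in> (gps :: ('a \<Rightarrow> 'r) set)" and y: "y \<in> (gps :: ('a \<Rightarrow> 'r) set)" for x y s
  proof -
    define F where "F = {(u,v). u + v = s \<and> x u \<noteq> 0 \<and> y v \<noteq> 0}"
    have fin: "finite F" unfolding F_def
      using fin_pairs[OF strict] x y unfolding gps_def by blast
    have Fs: "\<And>u v. (u,v) \<in> F \<Longrightarrow> u + v = s" unfolding F_def by auto
    have m1: "gps_mult (P_op w x) (P_op w y) s = (\<Sum>(u,v)\<in>F. P_op w x u * P_op w y v)"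
      by (rule gps_mult_F[OF fin Fs]) (auto simp: F_def P_op_def split: if_splits)
    have m2: "gps_mult x (P_op w y) s = (\<Sum>(u,v)\<in>F. x u * P_op w y v)"
      by (rule gps_mult_F[OF fin Fs]) (auto simp: F_def P_op_def split: if_splits)
    have m3: "gps_mult (P_op w x) y s = (\<Sum>(u,v)\<in>F. P_op w x u * y v)"
      by (rule gps_mult_F[OF fin Fs]) (auto simp: F_def P_op_def split: if_splits)
    have m4: "gps_mult x y s = (\<Sum>(u,v)\<in>F. x u * y v)"
      by (rule gps_mult_F[OF fin Fs]) (auto simp: F_def P_op_def split: if_splits)
    show ?thesis
    proof (cases "s < w")
      case True
      have "(\<Sum>(u,v)\<in>F. P_op w x u * P_op w y v)
          = (\<Sum>(u,v)\<in>F. x u * P_op w y v + P_op w x u * y v - x u * y v)"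
      proof (rule sum.cong[OF refl])
        fix p assume "p \<in> F"
        then obtain u v where p: "p = (u,v)" "u + v < w" using Fs True by (cases p) auto
        show "(case p of (u, v) \<Rightarrow> P_op w x u * P_op w y v) =
          (case p of (u, v) \<Rightarrow> x u * P_op w y v + P_op w x u * y v - x u * y v)"
          using p closeJ[of u v] by (auto simp: P_op_def)
      qed
      then show ?thesis using True m1 m2 m3 m4
        by (simp add: P_op_def sum.distrib sum_subtractf case_prod_unfold)
    next
      case False
      have "(\<Sum>(u,v)\<in>F. P_op w x u * P_op w y v) = (\<Sum>(u,v)\<in>F. 0)"
      proof (rule sum.cong[OF refl])
        fix p assume "p \<in> F"
        then obtain u v where p: "p = (u,v)" "\<not> u + v < w" using Fs False by (cases p) auto
        show "(case p of (u, v) \<Rightarrow> P_op w x u * P_op w y v) = (case p of (u, v) \<Rightarrow> 0)"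
          using p closeI[of u v] by (auto simp: P_op_def)
      qed
      then show ?thesis using False m1 by (simp add: P_op_def)
    qed
  qed
  show "rota_baxter (gps :: ('a \<Rightarrow> 'r) set) gps_mult (P_op w)"
    unfolding rota_baxter_def
  proof (intro conjI)
    show "\<forall>x\<in>(gps :: ('a \<Rightarrow> 'r) set). \<forall>y\<in>gps. P_op w (\<lambda>s. x s + y s) = (\<lambda>s. P_op w x s + P_op w y s)"
      by (auto simp: P_op_def fun_eq_iff)
    show "\<forall>r. \<forall>x\<in>(gps :: ('a \<Rightarrow> 'r) set). P_op w (\<lambda>s. r * x s) = (\<lambda>s. r * P_op w x s)"
      by (auto simp: P_op_def fun_eq_iff)
    show "\<forall>x\<in>(gps :: ('a \<Rightarrow> 'r) set). \<forall>y\<in>gps. gps_mult (P_op w x) (P_op w y) =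
      (\<lambda>s. P_op w (gps_mult x (P_op w y)) s + P_op w (gps_mult (P_op w x) y) s - P_op w (gps_mult x y) s)"
      using RB by blast
  qed (rule Pgps)
qed

end
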